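(* Let $\{1,\mu_1,\mu_2,\mu_3\}$ be a quaternion basis ($\mu_1,\mu_2$ orthogonal pure unit quaternions, $\mu_3=\mu_1\mu_2$), and let $q=z_1+z_2\mu_2$ with $z_1,z_2$ random variables in $\mathbb{C}_{\mu_1}$ be a centered quaternion Gaussian random variable which is $(\mu_1,\mu_1)$-proper, i.e. $q\stackrel{d}{=}\mu_1 q\mu_1$. Let ${\bf q}_{\mathbb{C}}=[z_1,z_1^{\star},z_2,z_2^{\star}]^T$. Then $$\mathbb{E}[{\bf q}_{\mathbb{C}}{\bf q}_{\mathbb{C}}^{\dagger}]=\begin{bmatrix}\sigma^2 & \alpha & 0 & 0\\ \alpha^{\star} & \sigma^2 & 0 & 0\\ 0 & 0 & \varsigma^2 & \delta\\ 0 & 0 & \delta^{\star} & \varsigma^2\end{bmatrix},$$ where $\sigma^2=\mathbb{E}[|z_1|^2]\in\mathbb{R}$, $\varsigma^2=\mathbb{E}[|z_2|^2]\in\mathbb{R}$, $\alpha=\mathbb{E}[z_1^2]\in\mathbb{C}_{\mu_1}$ and $\delta=\mathbb{E}[z_2^2]\in\mathbb{C}_{\mu_1}$.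
   Context: $\mathbb{H}$ denotes the quaternions; $\mathbb{C}_{\mu_1}=\mathbb{R}\oplus\mu_1\mathbb{R}$ is the commutative subfield isomorphic to $\mathbb{C}$; $^{\star}$ denotes conjugation and $\dagger$ conjugate transpose. A quaternion Gaussian random variable is one whose four real components are jointly Gaussian; centered means $\mathbb{E}[q]=0$. $\stackrel{d}{=}$ denotes equality in distribution. *)

theory Defs
  imports "HOL-Probability.Probability" "HOL-Library.Numeral_Type"
begin

text \<open>Quaternions, represented as real 4-vectors (components w.r.t. the
canonical basis 1, i, j, k; indices 0,1,2,3 of the index type 4), with the
Hamilton product and conjugation.  The Euclidean norm / inner product of
real^4 are the usual quaternion modulus / real inner product.\<close>

type_synonym quat = "real ^ 4"

definition qmk :: "real \<Rightarrow> real \<Rightarrow> real \<Rightarrow> real \<Rightarrow> quat" where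
  "qmk a b c d = (\<chi> i. if i = 0 then a else if i = 1 then b else if i = 2 then c else d)"

definition qof_real :: "real \<Rightarrow> quat" where
  "qof_real a = qmk a 0 0 0"

definition qmul :: "quat \<Rightarrow> quat \<Rightarrow> quat" where
  "qmul p q = qmk
     (p$0 * q$0 - p$1 * q$1 - p$2 * q$2 - p$3 * q$3)
     (p$0 * q$1 + p$1 * q$0 + p$2 * q$3 - p$3 * q$2)
     (p$0 * q$2 - p$1 * q$3 + p$2 * q$0 + p$3 * q$1)
     (p$0 * q$3 + p$1 * q$2 - p$2 * q$1 + p$3 * q$0)"

definition qcnj :: "quat \<Rightarrow> quat" where
  "qcnj p = qmk (p$0) (- p$1) (- p$2) (- p$3)"

definition pure_unit :: "quat \<Rightarrow> bool" where
  "pure_unit \<mu> \<longleftrightarrow> \<mu>$0 = 0 \<and> norm \<mu> = 1"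

definition Cmu :: "quat \<Rightarrow> quat set" where
  "Cmu \<mu> = {x. \<exists>a b. x = qof_real a + b *\<^sub>R \<mu>}"

text \<open>Quaternion Gaussian: the four real components are jointly Gaussian,
i.e. every real linear combination of them (= inner c (q \<omega>)) is a
univariate Gaussian, possibly degenerate (point mass).\<close>
definition quat_gaussian :: "'a measure \<Rightarrow> ('a \<Rightarrow> quat) \<Rightarrow> bool" where
  "quat_gaussian M q \<longleftrightarrow> q \<in> borel_measurable M \<and>
     (\<forall>c::quat. \<exists>m s. s \<ge> 0 \<and>
        distr M borel (\<lambda>\<omega>. inner c (q \<omega>)) =
          (if s = 0 then return borel m else density lborel (normal_density m s)))"

abbreviation qexp :: "'a measure \<Rightarrow> ('a \<Rightarrow> quat) \<Rightarrow> quat" where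
  "qexp M f \<equiv> integral\<^sup>L M f"

end

theory Submission imports Defs begin
lemma four0: "(4::4) = 0" by simp
lemma qmk_nth[simp]: "qmk a b c d $ 0 = a" "qmk a b c d $ 1 = b" "qmk a b c d $ 2 = c" "qmk a b c d $ 3 = d"
  by (simp_all add: qmk_def)
lemma quat_eq_iff: "(x::quat) = y \<longleftrightarrow> x$0 = y$0 \<and> x$1 = y$1 \<and> x$2 = y$2 \<and> x$3 = y$3"
  by (auto simp: vec_eq_iff forall_4 four0)
lemma quat_inner: "inner (x::quat) y = x$0*y$0 + x$1*y$1 + x$2*y$2 + x$3*y$3"
  by (simp add: inner_vec_def sum_4 four0)
lemma norm1: "norm (x::quat) = 1 \<Longrightarrow> x$0*x$0 + x$1*x$1 + x$2*x$2 + x$3*x$3 = 1"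
  by (metis norm_eq_1 quat_inner)
lemmas qs = qmul_def qcnj_def qof_real_def quat_inner
lemma key:
  fixes m n :: quat and a b c d :: real
  assumes "m$0 = 0" "n$0 = 0" "m$1*m$1+m$2*m$2+m$3*m$3 = 1" "n$1*n$1+n$2*n$2+n$3*n$3 = 1"
   "m$1*n$1+m$2*n$2+m$3*n$3 = 0"
  defines "x \<equiv> qof_real a + b *\<^sub>R m + qmul (qof_real c + d *\<^sub>R m) n"
  defines "y \<equiv> qmul (qmul m x) m"
  shows "x$0 = a" "inner x m = b" "inner x n = c" "inner x (qmul m n) = d"
   "y$0 = -a" "inner y m = -b" "inner y n = c" "inner y (qmul m n) = d"
  using assms(1-5) unfolding x_def y_def
  by (simp_all add: qs algebra_simps; algebra)+

lemma qmk_alt: "qmk a b c d = a *\<^sub>R qmk 1 0 0 0 + b *\<^sub>R qmk 0 1 0 0 + c *\<^sub>R qmk 0 0 1 0 + d *\<^sub>R qmk 0 0 0 1"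
  by (simp add: quat_eq_iff)

lemma cont_qmul[continuous_intros]:
  "continuous_on S f \<Longrightarrow> continuous_on S g \<Longrightarrow> continuous_on S (\<lambda>x. qmul (f x) (g x))"
  unfolding qmul_def by (subst qmk_alt) (intro continuous_intros)

lemma cont_qcnj[continuous_intros]:
  "continuous_on S f \<Longrightarrow> continuous_on S (\<lambda>x. qcnj (f x))"
  unfolding qcnj_def by (subst qmk_alt) (intro continuous_intros)

lemma cont_qof_real[continuous_intros]:
  "continuous_on S f \<Longrightarrow> continuous_on S (\<lambda>x. qof_real (f x))"
  unfolding qof_real_def by (subst qmk_alt) (intro continuous_intros)

lemma qcnj_qcnj[simp]: "qcnj (qcnj x) = x" by (simp add: qcnj_def quat_eq_iff)
lemma qmul_minus1[simp]: "qmul (-x) y = - qmul x y" by (simp add: qmul_def quat_eq_iff)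
lemma qmul_minus2[simp]: "qmul x (-y) = - qmul x y" by (simp add: qmul_def quat_eq_iff)
lemma qcnj_minus[simp]: "qcnj (-x) = - qcnj x" by (simp add: qcnj_def quat_eq_iff)
lemma qcnj_sq: "qmul (qcnj z) (qcnj z) = qcnj (qmul z z)"
  by (simp add: qs quat_eq_iff algebra_simps)
lemma qmul_cnj1: "qmul z (qcnj z) = qof_real ((norm z)\<^sup>2)"
  by (simp add: qs quat_eq_iff power2_norm_eq_inner algebra_simps)
lemma qmul_cnj2: "qmul (qcnj z) z = qof_real ((norm z)\<^sup>2)"
  by (simp add: qs quat_eq_iff power2_norm_eq_inner algebra_simps)
lemma qof_real_0[simp]: "qof_real 0 = 0" by (simp add: qof_real_def quat_eq_iff)

lemma lin_qcnj: "bounded_linear qcnj"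
  by (rule linear_conv_bounded_linear[THEN iffD1], rule linearI) (simp_all add: qcnj_def quat_eq_iff)
lemma lin_qof_real: "bounded_linear qof_real"
  by (rule linear_conv_bounded_linear[THEN iffD1], rule linearI) (simp_all add: qof_real_def quat_eq_iff)

lemma int_qcnj: "integral\<^sup>L M (\<lambda>x. qcnj (f x)) = qcnj (integral\<^sup>L M f)"
  by (rule integral_bounded_linear'[OF lin_qcnj lin_qcnj]) simp
lemma int_qof_real: "integral\<^sup>L M (\<lambda>x. qof_real (f x)) = qof_real (integral\<^sup>L M f)"
  by (rule integral_bounded_linear'[OF lin_qof_real bounded_linear_vec_nth[of 0]]) (simp add: qof_real_def)

definition PL :: "quat \<Rightarrow> quat \<Rightarrow> quat" where "PL m x = qof_real (x$0) + inner x m *\<^sub>R m"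

lemma Cmu_iff:
  assumes "m$0 = 0" "norm m = 1"
  shows "x \<in> Cmu m \<longleftrightarrow> PL m x = x"
proof
  assume "x \<in> Cmu m" then obtain a b where x: "x = qof_real a + b *\<^sub>R m" by (auto simp: Cmu_def)
  have n: "m$0*m$0 + m$1*m$1+m$2*m$2+m$3*m$3 = 1" using norm1[OF assms(2)] .
  show "PL m x = x" using assms(1) n unfolding x PL_def
    by (simp add: qs quat_eq_iff algebra_simps; algebra)
next
  assume "PL m x = x" then show "x \<in> Cmu m" unfolding PL_def Cmu_def by (metis (mono_tags, lifting) mem_Collect_eq)
qed

lemma lin_PL: "bounded_linear (PL m)"
  unfolding PL_def
  by (intro bounded_linear_add bounded_linear_compose[OF lin_qof_real] bounded_linear_vec_nth
      bounded_linear_compose[OF bounded_linear_scaleR_left bounded_linear_inner_left])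

lemma int_Cmu:
  assumes "m$0 = 0" "norm m = 1" "\<And>x. x \<in> space M \<Longrightarrow> f x \<in> Cmu m"
  shows "integral\<^sup>L M f \<in> Cmu m"
proof (cases "integrable M f")
  case True
  have "PL m (integral\<^sup>L M f) = integral\<^sup>L M (\<lambda>x. PL m (f x))"
    by (rule integral_bounded_linear[OF lin_PL True, symmetric])
  also have "\<dots> = integral\<^sup>L M f"
    using assms by (intro Bochner_Integration.integral_cong refl) (auto simp: Cmu_iff)
  finally show ?thesis using assms by (simp add: Cmu_iff)
next
  case False
  then show ?thesis by (simp add: not_integrable_integral_eq Cmu_def) (metis qof_real_0 add_0 scale_zero_left)
qed

lemma sq_Cmu:
  assumes "m$0 = 0" "norm m = 1" "z \<in> Cmu m"
  shows "qmul z z \<in> Cmu m"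
proof -
  obtain a b where z: "z = qof_real a + b *\<^sub>R m" using assms(3) by (auto simp: Cmu_def)
  have n: "m$0*m$0 + m$1*m$1+m$2*m$2+m$3*m$3 = 1" using norm1[OF assms(2)] .
  have "qmul z z = qof_real (a*a - b*b) + (2*a*b) *\<^sub>R m"
    using assms(1) n unfolding z by (simp add: qs quat_eq_iff algebra_simps; algebra)
  then show ?thesis by (auto simp: Cmu_def)
qed


definition P2 :: "quat \<Rightarrow> quat \<Rightarrow> quat \<Rightarrow> quat" where
  "P2 m n x = qof_real (inner x n) + inner x (qmul m n) *\<^sub>R m"

lemma odd_zero:
  fixes F :: "quat \<Rightarrow> quat \<Rightarrow> quat" and q z1 z2 :: "'a \<Rightarrow> quat"
  assumes qm: "q \<in> borel_measurable M"
  and dist: "distr M borel q = distr M borel (\<lambda>\<omega>. qmul (qmul m (q \<omega>)) m)"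
  and pw: "\<And>\<omega>. \<omega> \<in> space M \<Longrightarrow> PL m (q \<omega>) = z1 \<omega> \<and> P2 m n (q \<omega>) = z2 \<omega> \<and>
      PL m (qmul (qmul m (q \<omega>)) m) = - z1 \<omega> \<and> P2 m n (qmul (qmul m (q \<omega>)) m) = z2 \<omega>"
  and Gc: "continuous_on UNIV (\<lambda>x. F (PL m x) (P2 m n x))"
  and odd: "\<And>a b. F (-a) b = - F a b"
  shows "integral\<^sup>L M (\<lambda>\<omega>. F (z1 \<omega>) (z2 \<omega>)) = 0"
proof -
  define G where "G = (\<lambda>x. F (PL m x) (P2 m n x))"
  have Gm: "G \<in> borel_measurable borel" unfolding G_def by (rule borel_measurable_continuous_onI[OF Gc])
  have rc: "continuous_on UNIV (\<lambda>x. qmul (qmul m x) m)" by (intro continuous_intros)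
  have rm: "(\<lambda>\<omega>. qmul (qmul m (q \<omega>)) m) \<in> borel_measurable M"
    using measurable_compose[OF qm borel_measurable_continuous_onI[OF rc]] by (simp add: o_def)
  have "integral\<^sup>L M (\<lambda>\<omega>. F (z1 \<omega>) (z2 \<omega>)) = integral\<^sup>L M (\<lambda>\<omega>. G (q \<omega>))"
    using pw by (intro Bochner_Integration.integral_cong refl) (auto simp: G_def)
  also have "\<dots> = integral\<^sup>L (distr M borel q) G"
    by (rule integral_distr[OF qm Gm, symmetric])
  also have "\<dots> = integral\<^sup>L (distr M borel (\<lambda>\<omega>. qmul (qmul m (q \<omega>)) m)) G"
    by (simp add: dist)
  also have "\<dots> = integral\<^sup>L M (\<lambda>\<omega>. G (qmul (qmul m (q \<omega>)) m))"
    by (rule integral_distr[OF rm Gm])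
  also have "\<dots> = integral\<^sup>L M (\<lambda>\<omega>. - F (z1 \<omega>) (z2 \<omega>))"
    using pw by (intro Bochner_Integration.integral_cong refl) (auto simp: G_def odd)
  finally have "integral\<^sup>L M (\<lambda>\<omega>. F (z1 \<omega>) (z2 \<omega>)) = - integral\<^sup>L M (\<lambda>\<omega>. F (z1 \<omega>) (z2 \<omega>))"
    by simp
  then have "integral\<^sup>L M (\<lambda>\<omega>. F (z1 \<omega>) (z2 \<omega>)) + integral\<^sup>L M (\<lambda>\<omega>. F (z1 \<omega>) (z2 \<omega>)) = 0"
    by (metis add.right_inverse)
  then have "(2::real) *\<^sub>R integral\<^sup>L M (\<lambda>\<omega>. F (z1 \<omega>) (z2 \<omega>)) = 0" by (simp add: scaleR_2)
  then show ?thesis by simp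
qed


lemma all4: "(\<forall>i<(4::nat). P i) \<longleftrightarrow> P 0 \<and> P 1 \<and> P 2 \<and> P 3"
  by (auto simp: less_Suc_eq numeral_eq_Suc)

lemma qof_real_neg: "qof_real (-a) = - qof_real a" by (simp add: qof_real_def quat_eq_iff)

theorem mainTheorem6:
  fixes M :: "'a measure" and \<mu>1 \<mu>2 :: quat and q z1 z2 :: "'a \<Rightarrow> quat"
  assumes "prob_space M"
    and "pure_unit \<mu>1" and "pure_unit \<mu>2" and "inner \<mu>1 \<mu>2 = 0"
    and "z1 \<in> borel_measurable M" and "z2 \<in> borel_measurable M"
    and "\<And>\<omega>. \<omega> \<in> space M \<Longrightarrow> z1 \<omega> \<in> Cmu \<mu>1"
    and "\<And>\<omega>. \<omega> \<in> space M \<Longrightarrow> z2 \<omega> \<in> Cmu \<mu>1"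
    and "\<And>\<omega>. \<omega> \<in> space M \<Longrightarrow> q \<omega> = z1 \<omega> + qmul (z2 \<omega>) \<mu>2"
    and "quat_gaussian M q"
    and "qexp M q = 0"
    and "distr M borel q = distr M borel (\<lambda>\<omega>. qmul (qmul \<mu>1 (q \<omega>)) \<mu>1)"
  shows "let qC = (\<lambda>\<omega>. [z1 \<omega>, qcnj (z1 \<omega>), z2 \<omega>, qcnj (z2 \<omega>)]);
             \<sigma>2 = integral\<^sup>L M (\<lambda>\<omega>. (norm (z1 \<omega>))\<^sup>2);
             s2 = integral\<^sup>L M (\<lambda>\<omega>. (norm (z2 \<omega>))\<^sup>2);
             \<alpha> = qexp M (\<lambda>\<omega>. qmul (z1 \<omega>) (z1 \<omega>));
             \<delta> = qexp M (\<lambda>\<omega>. qmul (z2 \<omega>) (z2 \<omega>));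
             R = [[qof_real \<sigma>2, \<alpha>, 0, 0],
                  [qcnj \<alpha>, qof_real \<sigma>2, 0, 0],
                  [0, 0, qof_real s2, \<delta>],
                  [0, 0, qcnj \<delta>, qof_real s2]]
         in (\<forall>i<4. \<forall>j<4.
               qexp M (\<lambda>\<omega>. qmul (qC \<omega> ! i) (qcnj (qC \<omega> ! j))) = R ! i ! j)
            \<and> \<alpha> \<in> Cmu \<mu>1 \<and> \<delta> \<in> Cmu \<mu>1"
proof -
  note a = assms
  have m0: "\<mu>1$0 = 0" and mn: "norm \<mu>1 = 1" using a(2) by (auto simp: pure_unit_def)
  have n0: "\<mu>2$0 = 0" and nn: "norm \<mu>2 = 1" using a(3) by (auto simp: pure_unit_def)
  have m1: "\<mu>1$1*\<mu>1$1+\<mu>1$2*\<mu>1$2+\<mu>1$3*\<mu>1$3 = 1" using norm1[OF mn] m0 by simp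
  have n1: "\<mu>2$1*\<mu>2$1+\<mu>2$2*\<mu>2$2+\<mu>2$3*\<mu>2$3 = 1" using norm1[OF nn] n0 by simp
  have mn0: "\<mu>1$1*\<mu>2$1+\<mu>1$2*\<mu>2$2+\<mu>1$3*\<mu>2$3 = 0" using a(4) m0 by (simp add: quat_inner)
  have qm: "q \<in> borel_measurable M" using a(10) by (simp add: quat_gaussian_def)
  have pw: "PL \<mu>1 (q \<omega>) = z1 \<omega> \<and> P2 \<mu>1 \<mu>2 (q \<omega>) = z2 \<omega> \<and>
      PL \<mu>1 (qmul (qmul \<mu>1 (q \<omega>)) \<mu>1) = - z1 \<omega> \<and> P2 \<mu>1 \<mu>2 (qmul (qmul \<mu>1 (q \<omega>)) \<mu>1) = z2 \<omega>"
    if w: "\<omega> \<in> space M" for \<omega>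
  proof -
    obtain aa b where z1: "z1 \<omega> = qof_real aa + b *\<^sub>R \<mu>1" using a(7)[OF w] by (auto simp: Cmu_def)
    obtain c d where z2: "z2 \<omega> = qof_real c + d *\<^sub>R \<mu>1" using a(8)[OF w] by (auto simp: Cmu_def)
    have qw: "q \<omega> = qof_real aa + b *\<^sub>R \<mu>1 + qmul (qof_real c + d *\<^sub>R \<mu>1) \<mu>2"
      using a(9)[OF w] z1 z2 by simp
    note k = key[OF m0 n0 m1 n1 mn0, of aa b c d, folded qw]
    show ?thesis unfolding PL_def P2_def z1 z2 using k by (simp add: qof_real_neg)
  qed
  have Z: "integral\<^sup>L M (\<lambda>\<omega>. F (z1 \<omega>) (z2 \<omega>)) = 0"
    if "continuous_on UNIV (\<lambda>x. F (PL \<mu>1 x) (P2 \<mu>1 \<mu>2 x))" "\<And>a b. F (-a) b = - F a b" for F :: "quat \<Rightarrow> quat \<Rightarrow> quat"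
    by (rule odd_zero[where F=F and m="\<mu>1" and n="\<mu>2" and ?z1.0=z1 and ?z2.0=z2, OF qm a(12)])
       (use pw that in auto)
  have c: "continuous_on UNIV (PL \<mu>1)" "continuous_on UNIV (P2 \<mu>1 \<mu>2)"
    unfolding PL_def P2_def by (intro continuous_intros)+
  have e02: "qexp M (\<lambda>\<omega>. qmul (z1 \<omega>) (qcnj (z2 \<omega>))) = 0"
    by (rule Z[where F="\<lambda>a b. qmul a (qcnj b)", simplified]) (intro continuous_intros c)
  have e03: "qexp M (\<lambda>\<omega>. qmul (z1 \<omega>) (z2 \<omega>)) = 0"
    by (rule Z[where F="\<lambda>a b. qmul a b", simplified]) (intro continuous_intros c)
  have e12: "qexp M (\<lambda>\<omega>. qmul (qcnj (z1 \<omega>)) (qcnj (z2 \<omega>))) = 0"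
    by (rule Z[where F="\<lambda>a b. qmul (qcnj a) (qcnj b)", simplified]) (intro continuous_intros c)
  have e13: "qexp M (\<lambda>\<omega>. qmul (qcnj (z1 \<omega>)) (z2 \<omega>)) = 0"
    by (rule Z[where F="\<lambda>a b. qmul (qcnj a) b", simplified]) (intro continuous_intros c)
  have e20: "qexp M (\<lambda>\<omega>. qmul (z2 \<omega>) (qcnj (z1 \<omega>))) = 0"
    by (rule Z[where F="\<lambda>a b. qmul b (qcnj a)", simplified]) (intro continuous_intros c)
  have e21: "qexp M (\<lambda>\<omega>. qmul (z2 \<omega>) (z1 \<omega>)) = 0"
    by (rule Z[where F="\<lambda>a b. qmul b a", simplified]) (intro continuous_intros c)
  have e30: "qexp M (\<lambda>\<omega>. qmul (qcnj (z2 \<omega>)) (qcnj (z1 \<omega>))) = 0"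
    by (rule Z[where F="\<lambda>a b. qmul (qcnj b) (qcnj a)", simplified]) (intro continuous_intros c)
  have e31: "qexp M (\<lambda>\<omega>. qmul (qcnj (z2 \<omega>)) (z1 \<omega>)) = 0"
    by (rule Z[where F="\<lambda>a b. qmul (qcnj b) a", simplified]) (intro continuous_intros c)
  have d1: "qexp M (\<lambda>\<omega>. qmul (z \<omega>) (qcnj (z \<omega>))) = qof_real (integral\<^sup>L M (\<lambda>\<omega>. (norm (z \<omega>))\<^sup>2))"
    "qexp M (\<lambda>\<omega>. qmul (qcnj (z \<omega>)) (z \<omega>)) = qof_real (integral\<^sup>L M (\<lambda>\<omega>. (norm (z \<omega>))\<^sup>2))"
    "qexp M (\<lambda>\<omega>. qmul (qcnj (z \<omega>)) (qcnj (z \<omega>))) = qcnj (qexp M (\<lambda>\<omega>. qmul (z \<omega>) (z \<omega>)))"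
    for z :: "'a \<Rightarrow> quat"
    by (simp_all add: qmul_cnj1 qmul_cnj2 qcnj_sq int_qof_real int_qcnj)
  have cm: "qexp M (\<lambda>\<omega>. qmul (z1 \<omega>) (z1 \<omega>)) \<in> Cmu \<mu>1" "qexp M (\<lambda>\<omega>. qmul (z2 \<omega>) (z2 \<omega>)) \<in> Cmu \<mu>1"
    using a(7,8) by (auto intro!: int_Cmu[OF m0 mn] sq_Cmu[OF m0 mn])
  show ?thesis unfolding Let_def all4
    using e02 e03 e12 e13 e20 e21 e30 e31 d1 cm by simp
qed

end
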